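(* Let $\psi$ be a function analytic on $D_{s,\alpha}$, with $s>0$ and $\alpha\in(\pi/2,\pi]$. Assume that there exists $c>0$ such that $\psi(z)\sim -c\,z\ln z$ as $z$ tends to $0$ in $D_{s,\alpha}$. Then for every $\beta\in(0,\alpha)$ there exist $\rho\in(0,s)$, $\rho'>0$ and a function $\Upsilon$ analytic on $D_{\rho',\beta}$ with values in $D_{\rho,\alpha}$ such that $$\forall (y,z)\in D_{\rho',\beta}\times D_{\rho,\alpha},\qquad \psi(z)=y\iff z=\Upsilon(y).$$ Moreover, as $y$ tends to $0$ in $D_{\rho',\beta}$, $$\Upsilon(y)\sim-\frac{y}{c\ln y}.$$
   Context: For $\rho>0$ and $\alpha\in(0,\pi]$, $D_{\rho,\alpha}=\{re^{i\theta}: r\in(0,\rho),\ |\theta|<\alpha\}$. $\ln$ denotes the principal determination of the logarithm (on $\mathbb C\setminus(-\infty,0]$). *)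

theory Defs
  imports "HOL-Complex_Analysis.Complex_Analysis" "HOL-Library.Landau_Symbols"
begin

definition sector :: "real \<Rightarrow> real \<Rightarrow> complex set" where
  "sector \<rho> \<alpha> = {complex_of_real r * exp (\<i> * complex_of_real \<theta>) | r \<theta>.
      0 < r \<and> r < \<rho> \<and> \<bar>\<theta>\<bar> < \<alpha>}"

end

theory Submission
  imports Defs "HOL-Real_Asymp.Real_Asymp"
begin

lemma sector_iff:
  assumes "0 < \<alpha>" "\<alpha> \<le> pi"
  shows "z \<in> sector \<rho> \<alpha> \<longleftrightarrow> z \<noteq> 0 \<and> norm z < \<rho> \<and> \<bar>Im (Ln z)\<bar> < \<alpha>"
proof
  assume "z \<in> sector \<rho> \<alpha>"
  then obtain r \<theta> where z: "z = complex_of_real r * exp (\<i> * complex_of_real \<theta>)"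
    and r: "0 < r" "r < \<rho>" and th: "\<bar>\<theta>\<bar> < \<alpha>" unfolding sector_def by auto
  have ce: "Complex (ln r) \<theta> = complex_of_real (ln r) + \<i> * complex_of_real \<theta>"
    by (simp add: complex_eq_iff)
  have ze: "z = exp (Complex (ln r) \<theta>)"
    unfolding ce exp_add using r by (simp add: z exp_of_real)
  have "Ln z = Complex (ln r) \<theta>" unfolding ze using th assms by (intro Ln_exp) auto
  moreover have "norm z = r" using r by (simp add: z norm_mult)
  ultimately show "z \<noteq> 0 \<and> norm z < \<rho> \<and> \<bar>Im (Ln z)\<bar> < \<alpha>" using r th by auto
next
  assume h: "z \<noteq> 0 \<and> norm z < \<rho> \<and> \<bar>Im (Ln z)\<bar> < \<alpha>"
  have "z = exp (Ln z)" using h by simp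
  also have "Ln z = complex_of_real (ln (norm z)) + \<i> * complex_of_real (Im (Ln z))"
    using h by (simp add: complex_eq_iff)
  finally have "z = complex_of_real (norm z) * exp (\<i> * complex_of_real (Im (Ln z)))"
    using h by (simp add: exp_add exp_of_real)
  thus "z \<in> sector \<rho> \<alpha>" unfolding sector_def using h by force
qed

lemma exp_in_sector:
  assumes "0 < \<alpha>" "\<alpha> \<le> pi" "0 < \<rho>" "\<bar>Im u\<bar> < \<alpha>"
  shows "exp u \<in> sector \<rho> \<alpha> \<longleftrightarrow> Re u < ln \<rho>"
proof -
  have "Ln (exp u) = u" using assms by (intro Ln_exp) auto
  moreover have "exp (Re u) < \<rho> \<longleftrightarrow> Re u < ln \<rho>"
    by (metis assms(3) exp_less_cancel_iff exp_ln)
  ultimately show ?thesis using assms by (simp add: sector_iff)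
qed

lemma Im_Ln_small:
  assumes "X > 0" "Re v \<ge> X" "\<bar>Im v\<bar> \<le> pi"
  shows "\<bar>Im (Ln v)\<bar> \<le> pi / X"
proof -
  have "v \<noteq> 0" using assms by auto
  hence "Im (Ln v) = arctan (Im v / Re v)" using assms by (simp add: Arg_eq_Im_Ln[symmetric] arg_conv_arctan)
  hence "\<bar>Im (Ln v)\<bar> \<le> \<bar>Im v / Re v\<bar>" by (metis abs_arctan_le)
  also have "\<dots> = \<bar>Im v\<bar> / Re v" using assms by (simp add: abs_divide)
  also have "\<dots> \<le> pi / X" using assms by (intro frac_le) auto
  finally show ?thesis .
qed

lemma norm_Ln_le: assumes "v \<noteq> 0" shows "norm (Ln v) \<le> \<bar>ln (norm v)\<bar> + pi"
proof -
  have "norm (Ln v) \<le> \<bar>Re (Ln v)\<bar> + \<bar>Im (Ln v)\<bar>" by (rule cmod_le)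
  moreover have "\<bar>Im (Ln v)\<bar> \<le> pi" using mpi_less_Im_Ln[of v] Im_Ln_le_pi[of v] assms by auto
  ultimately show ?thesis using assms by simp
qed

lemma Ln_diff_bound:
  assumes "m > 0" "Re a \<ge> m" "Re b \<ge> m"
  shows "norm (Ln a - Ln b) \<le> norm (a - b) / m"
proof -
  let ?S = "{v. m \<le> Re v}"
  have "norm (Ln a - Ln b) \<le> (1/m) * norm (a - b)"
  proof (rule field_differentiable_bound[of ?S Ln inverse])
    show "convex ?S" by (rule convex_halfspace_Re_ge)
    fix z assume z: "z \<in> ?S"
    have "Re z > 0" using z assms by simp
    hence "z \<notin> \<real>\<^sub>\<le>\<^sub>0" by (auto simp: complex_nonpos_Reals_iff)
    thus "(Ln has_field_derivative inverse z) (at z within ?S)"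
      by (rule has_field_derivative_at_within[OF has_field_derivative_Ln])
    have "m \<le> norm z" using z complex_Re_le_cmod[of z] by auto
    have "norm (inverse z) = 1 / norm z" by (metis norm_inverse inverse_eq_divide)
    also have "\<dots> \<le> 1 / m" using \<open>m \<le> norm z\<close> assms by (intro frac_le) auto
    finally show "norm (inverse z) \<le> 1/m" .
  qed (use assms in auto)
  thus ?thesis by simp
qed

lemma contraction_exists:
  fixes G :: "complex \<Rightarrow> complex"
  assumes "r > 0" "cball u0 r \<subseteq> V"
    and lip: "\<And>a b. a \<in> V \<Longrightarrow> b \<in> V \<Longrightarrow> norm (G a - G b) \<le> 1/2 * norm (a - b)"
    and "norm (u0 + G u0 - w) \<le> r/2"
  shows "\<exists>u\<in>cball u0 r. u + G u = w"
proof -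
  let ?T = "\<lambda>u. w - G u"
  have "\<exists>!u\<in>cball u0 r. ?T u = u"
  proof (rule Banach_fix[where c="1/2"])
    show "complete (cball u0 r)" by (simp add: compact_imp_complete)
    show "cball u0 r \<noteq> {}" using assms by auto
    show "?T ` cball u0 r \<subseteq> cball u0 r"
    proof
      fix x assume "x \<in> ?T ` cball u0 r"
      then obtain u where u: "u \<in> cball u0 r" "x = ?T u" by auto
      have "norm (G u - G u0) \<le> 1/2 * norm (u - u0)" using u assms by (intro lip) auto
      also have "\<dots> \<le> r/2" using u by (simp add: dist_norm norm_minus_commute)
      finally have gg: "norm (G u - G u0) \<le> r/2" .
      have "x - u0 = (G u0 - G u) + (w - G u0 - u0)" using u by simp
      moreover have "norm (w - G u0 - u0) \<le> r/2" using assms(4) by (simp add: norm_minus_commute algebra_simps)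
      ultimately have "norm (x - u0) \<le> norm (G u0 - G u) + norm (w - G u0 - u0)"
        by (metis norm_triangle_ineq)
      moreover have "norm (G u0 - G u) \<le> r/2" using gg by (simp add: norm_minus_commute)
      ultimately have "norm (x - u0) \<le> r" using \<open>norm (w - G u0 - u0) \<le> r/2\<close> by linarith
      thus "x \<in> cball u0 r" by (simp add: dist_norm norm_minus_commute)
    qed
    fix x y assume "x \<in> cball u0 r" "y \<in> cball u0 r"
    hence "norm (G y - G x) \<le> 1/2 * norm (y - x)" using assms by (intro lip) auto
    thus "dist (?T x) (?T y) \<le> 1/2 * dist x y" by (simp add: dist_norm norm_minus_commute)
  qed auto
  thus ?thesis by (metis add_diff_cancel_right' diff_add_cancel)
qed


lemma Ln_small:
  fixes t :: complex assumes "norm t \<le> 1/2"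
  shows "norm (Ln (1 + t)) \<le> 2 * norm t"
proof -
  have "norm (Ln (1 + t) - t) \<le> norm t ^ 2 / (1 - norm t)"
    using assms by (intro Ln_approx_linear) auto
  also have "\<dots> \<le> norm t"
  proof -
    have "norm t ^ 2 \<le> norm t * (1 - norm t)" using assms
      by (simp add: power2_eq_square mult_left_mono)
    thus ?thesis using assms by (simp add: divide_le_eq)
  qed
  finally have "norm (Ln (1 + t) - t) \<le> norm t" .
  moreover have "norm (Ln (1 + t)) \<le> norm (Ln (1 + t) - t) + norm t"
    by (metis diff_add_cancel norm_triangle_ineq)
  ultimately show ?thesis by linarith
qed

lemma inv_prod_bound:
  fixes a h :: complex and t :: real
  assumes "norm (a - 1) \<le> t" "norm (h - 1) \<le> t" "t \<le> 1/4"
  shows "norm (inverse (a * h) - 1) \<le> 12 * t"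
proof -
  have t0: "0 \<le> t" using assms(1) norm_ge_zero order_trans by blast
  have "a * h - 1 = (a - 1) * h + (h - 1)" by (simp add: algebra_simps)
  hence "norm (a * h - 1) \<le> norm (a - 1) * norm h + norm (h - 1)"
    by (metis norm_mult norm_triangle_ineq)
  moreover have "norm h \<le> 1 + t"
    using assms(2) norm_triangle_ineq[of "h - 1" 1] by simp
  ultimately have "norm (a * h - 1) \<le> t * (1 + t) + t"
    using assms t0 by (smt (verit) mult_mono norm_ge_zero)
  also have "\<dots> \<le> 3 * t"
  proof -
    have "t * t \<le> t * 1" using t0 assms by (intro mult_left_mono) auto
    thus ?thesis by (simp add: distrib_left)
  qed
  finally have p1: "norm (a * h - 1) \<le> 3 * t" .
  have "1 \<le> norm (a * h) + norm (a * h - 1)"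
    using norm_triangle_ineq[of "a*h" "1 - a*h"] by (simp add: norm_minus_commute)
  hence p2: "norm (a * h) \<ge> 1/4" using p1 assms by linarith
  hence nz: "a * h \<noteq> 0" by auto
  have "inverse (a * h) - 1 = (1 - a * h) / (a * h)" using nz by (simp add: field_simps)
  hence "norm (inverse (a * h) - 1) = norm (a * h - 1) / norm (a * h)"
    by (simp add: norm_divide norm_minus_commute)
  also have "\<dots> \<le> (3 * t) / (1/4)" using p1 p2 t0 by (intro frac_le) auto
  finally show ?thesis by simp
qed

lemma asym_limits:
  fixes A :: real
  shows "((\<lambda>X::real. (A + ln(X+pi) + pi + 1)/X) \<longlongrightarrow> 0) at_top"
    and "filterlim (\<lambda>X::real. X - (A + ln(X+pi)+pi+1)) at_top at_top"
    and "((\<lambda>X::real. (A+ln(X+pi)+pi+1)/(X - (A+ln(X+pi)+pi+1))) \<longlongrightarrow> 0) at_top"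
    and "((\<lambda>X::real. pi / X) \<longlongrightarrow> 0) at_top"
  by real_asymp+

theorem theorem6p2p1:
  fixes \<psi> :: "complex \<Rightarrow> complex" and s \<alpha> c :: real
  assumes "s > 0" and "pi / 2 < \<alpha>" and "\<alpha> \<le> pi"
    and "\<psi> analytic_on sector s \<alpha>"
    and "c > 0"
    and "\<psi> \<sim>[at 0 within sector s \<alpha>] (\<lambda>z. - of_real c * z * Ln z)"
  shows "\<forall>\<beta>. 0 < \<beta> \<and> \<beta> < \<alpha> \<longrightarrow>
    (\<exists>\<rho> \<rho>' \<Upsilon>. 0 < \<rho> \<and> \<rho> < s \<and> 0 < \<rho>' \<and>
       \<Upsilon> analytic_on sector \<rho>' \<beta> \<and> \<Upsilon> ` sector \<rho>' \<beta> \<subseteq> sector \<rho> \<alpha> \<and>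
       (\<forall>y \<in> sector \<rho>' \<beta>. \<forall>z \<in> sector \<rho> \<alpha>. \<psi> z = y \<longleftrightarrow> z = \<Upsilon> y) \<and>
       \<Upsilon> \<sim>[at 0 within sector \<rho>' \<beta>] (\<lambda>y. - y / (of_real c * Ln y)))"
proof (intro allI impI)
  fix \<beta> assume hb: "0 < \<beta> \<and> \<beta> < \<alpha>"
  hence b0: "0 < \<beta>" and ba: "\<beta> < \<alpha>" by auto
  have a0: "0 < \<alpha>" using assms(2) pi_gt_zero by linarith
  have api: "\<alpha> \<le> pi" by (rule assms(3))
  define r where "r = min 1 ((\<alpha> - \<beta>)/4)"
  have r0: "0 < r" "r \<le> 1" "r \<le> (\<alpha> - \<beta>)/4" using ba by (auto simp: r_def min_def)
  have r4: "4 * r \<le> \<alpha> - \<beta>" using r0(3) by simp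
  define e0 where "e0 = r/4"
  define H where "H = (\<lambda>u. \<psi> (exp u) / (- of_real c * exp u * u))"
  have cnz: "complex_of_real c \<noteq> 0" using assms(5) by simp

  have HA: "\<exists>M. \<forall>u. Re u < -M \<and> \<bar>Im u\<bar> < \<alpha> \<longrightarrow> norm (H u - 1) < \<epsilon>" if "\<epsilon> > 0" for \<epsilon>
  proof -
    have ev: "eventually (\<lambda>z. \<psi> z \<noteq> 0 \<or> - of_real c * z * Ln z \<noteq> 0) (at 0 within sector s \<alpha>)"
      unfolding eventually_at
    proof (intro exI[of _ 1] conjI ballI impI)
      fix z assume "z \<in> sector s \<alpha>" "z \<noteq> 0 \<and> dist z 0 < 1"
      hence z: "z \<noteq> 0" "norm z < 1" by auto
      have "Ln z \<noteq> 0"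
      proof
        assume "Ln z = 0"
        hence "z = 1" using z by (metis exp_Ln exp_zero)
        thus False using z by simp
      qed
      thus "\<psi> z \<noteq> 0 \<or> - of_real c * z * Ln z \<noteq> 0" using z cnz by simp
    qed simp
    have lim: "((\<lambda>z. \<psi> z / (- of_real c * z * Ln z)) \<longlongrightarrow> 1) (at 0 within sector s \<alpha>)"
      by (rule asymp_equivD_strong[OF assms(6) ev])
    from tendstoD[OF lim that] obtain d where d: "d > 0"
      "\<And>z. z \<in> sector s \<alpha> \<Longrightarrow> z \<noteq> 0 \<and> dist z 0 < d \<Longrightarrow> dist (\<psi> z / (- of_real c * z * Ln z)) 1 < \<epsilon>"
      unfolding eventually_at by blast
    show ?thesis
    proof (intro exI[of _ "- min (ln s) (ln d)"] allI impI)
      fix u assume u: "Re u < - (- min (ln s) (ln d)) \<and> \<bar>Im u\<bar> < \<alpha>"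
      have "exp u \<in> sector s \<alpha>" using u a0 api assms(1) by (subst exp_in_sector) auto
      moreover have "dist (exp u) 0 < d" using u d(1)
        by (simp add: ln_less_cancel_iff) (metis exp_less_cancel_iff exp_ln)
      ultimately have "dist (\<psi> (exp u) / (- of_real c * exp u * Ln (exp u))) 1 < \<epsilon>"
        using d(2) by auto
      moreover have "Ln (exp u) = u" using u api by (intro Ln_exp) auto
      ultimately show "norm (H u - 1) < \<epsilon>" by (simp add: H_def dist_norm)
    qed
  qed

  obtain M1 where M1: "\<And>u. Re u < -M1 \<Longrightarrow> \<bar>Im u\<bar> < \<alpha> \<Longrightarrow> norm (H u - 1) < e0/2"
    using HA[of "e0/2"] r0 e0_def by auto
  define M where "M = max (max M1 (- ln s)) (max 4 (4 * pi / r))"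
  have M: "M \<ge> M1" "M \<ge> - ln s" "M \<ge> 4" "pi / M \<le> r/4"
  proof -
    show "M \<ge> M1" "M \<ge> - ln s" "M \<ge> 4" by (auto simp: M_def)
    have "4 * pi / r \<le> M" by (auto simp: M_def)
    hence "4 * pi \<le> M * r" using r0 by (simp add: divide_le_eq)
    thus "pi / M \<le> r/4" using \<open>M \<ge> 4\<close> by (simp add: divide_le_eq) (metis mult.commute)
  qed
  define S where "S = {u. Re u < -M \<and> \<bar>Im u\<bar> < \<alpha>}"
  define E where "E = (\<lambda>u. Ln (H u))"
  define G where "G = (\<lambda>u. complex_of_real (ln c) + Ln (- u) + E u)"
  define F where "F = (\<lambda>u. u + G u)"
  have openS: "open S"
  proof -
    have "S = {u. Re u < -M} \<inter> {u. Im u < \<alpha>} \<inter> {u. Im u > -\<alpha>}" by (auto simp: S_def)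
    thus ?thesis by (simp add: open_Int open_halfspace_Re_lt open_halfspace_Im_lt open_halfspace_Im_gt)
  qed
  have Su: "u \<noteq> 0" "Re u < 0" "exp u \<in> sector s \<alpha>" "norm (H u - 1) < e0/2"
       "Re (H u) > 0" "norm (E u) < e0" "\<psi> (exp u) = - of_real c * exp u * u * H u"
       "exp (F u) = \<psi> (exp u)" "\<bar>Im (Ln (- u))\<bar> \<le> r/4" "\<bar>Im (F u) - Im u\<bar> \<le> r/2"
    if "u \<in> S" for u
  proof -
    from that have u: "Re u < -M" "\<bar>Im u\<bar> < \<alpha>" by (auto simp: S_def)
    show "Re u < 0" using u M by linarith
    thus "u \<noteq> 0" by auto
    show "exp u \<in> sector s \<alpha>" using u M a0 api assms(1) by (subst exp_in_sector) auto
    show h1: "norm (H u - 1) < e0/2" using M1 u M by auto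
    have "1 - Re (H u) \<le> norm (H u - 1)" using abs_Re_le_cmod[of "H u - 1"] by auto
    thus "Re (H u) > 0" using h1 r0 e0_def by linarith
    have "norm (Ln (1 + (H u - 1))) \<le> 2 * norm (H u - 1)"
      using h1 r0 e0_def by (intro Ln_small) auto
    thus "norm (E u) < e0" using h1 by (simp add: E_def)
    show eq: "\<psi> (exp u) = - of_real c * exp u * u * H u"
      using \<open>u \<noteq> 0\<close> cnz by (simp add: H_def)
    have "H u \<noteq> 0" using \<open>Re (H u) > 0\<close> by auto
    have "exp (F u) = exp u * of_real c * (- u) * H u"
      using \<open>u \<noteq> 0\<close> \<open>H u \<noteq> 0\<close> assms(5)
      by (simp add: F_def G_def E_def exp_add exp_of_real)
    thus "exp (F u) = \<psi> (exp u)" using eq by (simp add: algebra_simps)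
    have "\<bar>Im (Ln (- u))\<bar> \<le> pi / M" using u M api by (intro Im_Ln_small) auto
    thus iml: "\<bar>Im (Ln (- u))\<bar> \<le> r/4" using M by linarith
    have "\<bar>Im (E u)\<bar> \<le> norm (E u)" by (rule abs_Im_le_cmod)
    hence "\<bar>Im (E u)\<bar> \<le> r/4" using \<open>norm (E u) < e0\<close> e0_def by linarith
    moreover have "Im (F u) - Im u = Im (Ln (- u)) + Im (E u)" by (simp add: F_def G_def)
    ultimately show "\<bar>Im (F u) - Im u\<bar> \<le> r/2" using iml by linarith
  qed

  have holH: "H holomorphic_on S"
  proof -
    have "\<psi> holomorphic_on sector s \<alpha>" using assms(4) by (rule analytic_imp_holomorphic)
    hence "(\<psi> \<circ> exp) holomorphic_on S"
      by (rule holomorphic_on_compose_gen[OF holomorphic_on_exp]) (use Su in auto)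
    hence "(\<lambda>u. \<psi> (exp u)) holomorphic_on S" by (simp add: o_def)
    thus ?thesis unfolding H_def using Su cnz by (intro holomorphic_intros) auto
  qed
  have holE: "E holomorphic_on S"
    unfolding E_def
  proof (rule holomorphic_on_Ln'[OF _ holH])
    fix u assume "u \<in> S"
    thus "H u \<notin> \<real>\<^sub>\<le>\<^sub>0" using Su(5)[OF \<open>u \<in> S\<close>] by (auto simp: complex_nonpos_Reals_iff)
  qed
  have holG: "G holomorphic_on S"
  proof -
    have "(\<lambda>u. Ln (- u)) holomorphic_on S"
    proof (rule holomorphic_on_Ln')
      fix u assume "u \<in> S"
      thus "- u \<notin> \<real>\<^sub>\<le>\<^sub>0" using Su(2)[OF \<open>u \<in> S\<close>] by (auto simp: complex_nonpos_Reals_iff)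
    qed (intro holomorphic_intros)
    from holomorphic_on_add[OF holomorphic_on_add[OF holomorphic_on_const[of "complex_of_real (ln c)" S] this] holE]
    show ?thesis by (simp add: G_def)
  qed
  have holF: "F holomorphic_on S" unfolding F_def
    using holomorphic_on_add[OF holomorphic_on_ident holG] by simp
  define V where "V = {u. Re u < -(M+1) \<and> \<bar>Im u\<bar> < \<alpha> - r}"
  have VS: "V \<subseteq> S" using r0 by (auto simp: V_def S_def)
  have openV: "open V"
  proof -
    have "V = {u. Re u < -(M+1)} \<inter> {u. Im u < \<alpha> - r} \<inter> {u. Im u > -(\<alpha> - r)}" by (auto simp: V_def)
    thus ?thesis by (simp add: open_Int open_halfspace_Re_lt open_halfspace_Im_lt open_halfspace_Im_gt)
  qed
  have convV: "convex V"
  proof -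
    have "V = {u. Re u < -(M+1)} \<inter> {u. Im u < \<alpha> - r} \<inter> {u. Im u > -(\<alpha> - r)}" by (auto simp: V_def)
    thus ?thesis by (simp add: convex_Int convex_halfspace_Re_lt convex_halfspace_Im_lt convex_halfspace_Im_gt)
  qed
  have cballS: "cball u r \<subseteq> S" if "u \<in> V" for u
  proof
    fix v assume "v \<in> cball u r"
    hence nv: "norm (v - u) \<le> r" by (simp add: dist_norm norm_minus_commute)
    have "\<bar>Re (v - u)\<bar> \<le> r" "\<bar>Im (v - u)\<bar> \<le> r"
      using nv abs_Re_le_cmod abs_Im_le_cmod order_trans by blast+
    thus "v \<in> S" using that r0 by (auto simp: V_def S_def)
  qed
  have dG: "(G has_field_derivative (1 / u + deriv E u)) (at u)" "norm (1 / u + deriv E u) \<le> 1/2"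
    if "u \<in> V" for u
  proof -
    have uS: "u \<in> S" using that VS by auto
    have "Re (- u) > 0" using Su(2)[OF uS] by simp
    hence nr: "- u \<notin> \<real>\<^sub>\<le>\<^sub>0" by (auto simp: complex_nonpos_Reals_iff)
    have dE: "(E has_field_derivative deriv E u) (at u)"
      using holE openS uS by (rule holomorphic_derivI)
    have "((\<lambda>u. Ln (- u)) has_field_derivative (inverse (- u) * (- 1))) (at u)"
    proof -
      have dm: "((\<lambda>x. - x) has_field_derivative - 1) (at u)" by (auto intro!: derivative_eq_intros)
      show ?thesis by (rule DERIV_chain2[OF _ dm]) (use has_field_derivative_Ln[OF nr] in simp)
    qed
    moreover have "inverse (- u) * (- 1) = 1 / u" by (simp add: divide_inverse)
    ultimately have lnd: "((\<lambda>u. Ln (- u)) has_field_derivative 1 / u) (at u)" by simp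
    from DERIV_add[OF DERIV_add[OF DERIV_const[of "complex_of_real (ln c)"] lnd] dE]
    show "(G has_field_derivative (1 / u + deriv E u)) (at u)"
      by (simp add: G_def)
    have "norm ((deriv ^^ 1) E u) \<le> fact 1 * e0 / r ^ 1"
    proof (rule Cauchy_higher_deriv_bound)
      show "E holomorphic_on ball u r" using holE cballS[OF that] ball_subset_cball
        by (meson holomorphic_on_subset order_trans)
      show "continuous_on (cball u r) E"
        using holE cballS[OF that] holomorphic_on_imp_continuous_on holomorphic_on_subset by blast
      fix w assume "w \<in> ball u r"
      hence "w \<in> S" using cballS[OF that] by auto
      thus "E w \<in> ball 0 e0" using Su(6) by simp
    qed (use r0 in auto)
    hence "norm (deriv E u) \<le> 1/4" using r0 by (simp add: e0_def)
    moreover have "norm (1 / u) \<le> 1/4"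
    proof -
      have "M + 1 \<le> \<bar>Re u\<bar>" using that by (auto simp: V_def)
      also have "\<dots> \<le> norm u" by (rule abs_Re_le_cmod)
      finally have "4 \<le> norm u" using M by linarith
      thus ?thesis by (simp add: norm_divide divide_le_eq)
    qed
    ultimately show "norm (1 / u + deriv E u) \<le> 1/2"
      using norm_triangle_ineq[of "1/u" "deriv E u"] by linarith
  qed
  have lipG: "norm (G a - G b) \<le> 1/2 * norm (a - b)" if "a \<in> V" "b \<in> V" for a b
    by (rule field_differentiable_bound[OF convV _ _ that])
       (auto intro: has_field_derivative_at_within dG(1) dG(2)[simplified])
  have injF: "inj_on F V"
  proof (rule inj_onI)
    fix a b assume ab: "a \<in> V" "b \<in> V" "F a = F b"
    hence "a - b = G b - G a" by (simp add: F_def algebra_simps)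
    hence "norm (a - b) = norm (G b - G a)" by simp
    also have "\<dots> \<le> 1/2 * norm (b - a)" using lipG[OF ab(2,1)] .
    also have "\<dots> = 1/2 * norm (a - b)" by (simp add: norm_minus_commute)
    finally have "norm (a - b) \<le> 0" by simp
    thus "a = b" by simp
  qed

  define A where "A = \<bar>ln c\<bar>"
  define L where "L = (\<lambda>X::real. A + ln (X + pi) + pi + 1)"
  have evK: "eventually (\<lambda>X. 1 \<le> X \<and> pi / X \<le> r \<and> X - L X > M + 2 \<and> L X / (X - L X) \<le> r/4) at_top"
  proof -
    note lims = asym_limits(1)[of A] asym_limits(2)[of A] asym_limits(3)[of A] asym_limits(4)
    have "eventually (\<lambda>X::real. 1 \<le> X) at_top" by (rule eventually_ge_at_top)
    moreover have "eventually (\<lambda>X. pi / X < r) at_top"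
      using order_tendstoD(2)[OF lims(4), of r] r0 by simp
    moreover have "eventually (\<lambda>X. X - L X > M + 2) at_top"
      using filterlim_at_top_dense[THEN iffD1, OF lims(2)] unfolding L_def by blast
    moreover have "eventually (\<lambda>X. L X / (X - L X) < r/4) at_top"
      using order_tendstoD(2)[OF lims(3), of "r/4"] r0 unfolding L_def by simp
    ultimately show ?thesis by eventually_elim auto
  qed
  then obtain K where K: "\<And>X. X \<ge> K \<Longrightarrow> 1 \<le> X \<and> pi / X \<le> r \<and> X - L X > M + 2 \<and> L X / (X - L X) \<le> r/4"
    unfolding eventually_at_top_linorder by blast
  have EX: "\<exists>u\<in>V. F u = w \<and> norm (u - w) \<le> L (- Re w)"
    if w: "Re w < -K" "\<bar>Im w\<bar> < \<beta>" for w
  proof -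
    define X where "X = - Re w"
    have X: "1 \<le> X" "pi / X \<le> r" "X - L X > M + 2" "L X / (X - L X) \<le> r/4"
      using K[of X] w by (auto simp: X_def)
    have bpi: "\<beta> < pi" using ba api by linarith
    have nw1: "X \<le> norm w" using abs_Re_le_cmod[of w] by (simp add: X_def)
    have rw0: "Re w < 0" using X by (simp add: X_def)
    have nw2: "norm w \<le> X + pi" using cmod_le[of w] w bpi rw0 by (simp add: X_def abs_of_neg)
    have wnz: "w \<noteq> 0" using nw1 X by auto
    have "norm (Ln (- w)) \<le> \<bar>ln (norm (- w))\<bar> + pi" using wnz by (intro norm_Ln_le) auto
    also have "\<bar>ln (norm (- w))\<bar> \<le> ln (X + pi)"
    proof -
      have "0 \<le> ln (norm w)" using nw1 X by simp
      moreover have "ln (norm w) \<le> ln (X + pi)" using nw1 nw2 X(1) by (intro ln_mono) auto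
      ultimately show ?thesis by simp
    qed
    finally have nLw: "norm (Ln (- w)) \<le> ln (X + pi) + pi" by simp
    define u0 where "u0 = w - of_real (ln c) - Ln (- w)"
    have "norm (u0 - w) \<le> norm (complex_of_real (ln c)) + norm (Ln (- w))"
      unfolding u0_def by (metis diff_diff_eq2 diff_diff_eq diff_0 diff_self minus_diff_eq norm_minus_cancel norm_triangle_ineq4 add_diff_cancel_left' )
    hence nu0: "norm (u0 - w) \<le> L X - 1" using nLw by (simp add: L_def A_def)
    have LX: "L X \<ge> 1" using nu0 norm_ge_zero[of "u0 - w"] by linarith
    have Reu0: "Re (- u0) \<ge> X - L X"
    proof -
      have "\<bar>Re (u0 - w)\<bar> \<le> L X - 1" using nu0 abs_Re_le_cmod order_trans by blast
      thus ?thesis by (simp add: X_def)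
    qed
    have Imu0: "\<bar>Im u0\<bar> < \<beta> + r"
    proof -
      have "\<bar>Im (Ln (- w))\<bar> \<le> pi / X"
        using X w bpi by (intro Im_Ln_small) (auto simp: X_def)
      moreover have "Im u0 = Im w - Im (Ln (- w))" by (simp add: u0_def)
      ultimately show ?thesis using X w by linarith
    qed
    have cb: "cball u0 r \<subseteq> V"
    proof
      fix v assume "v \<in> cball u0 r"
      hence nv: "norm (v - u0) \<le> r" by (simp add: dist_norm norm_minus_commute)
      have "\<bar>Re (v - u0)\<bar> \<le> r" "\<bar>Im (v - u0)\<bar> \<le> r"
        using nv abs_Re_le_cmod abs_Im_le_cmod order_trans by blast+
      thus "v \<in> V" using Reu0 Imu0 X r0 by (auto simp: V_def)
    qed
    have u0V: "u0 \<in> V" using cb r0 by auto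
    have "u0 + G u0 - w = (Ln (- u0) - Ln (- w)) + E u0" by (simp add: u0_def G_def)
    hence "norm (u0 + G u0 - w) \<le> norm (Ln (- u0) - Ln (- w)) + norm (E u0)"
      by (metis norm_triangle_ineq)
    also have "norm (Ln (- u0) - Ln (- w)) \<le> norm (- u0 - - w) / (X - L X)"
      using Reu0 X M LX by (intro Ln_diff_bound) (auto simp: X_def)
    also have "norm (- u0 - - w) / (X - L X) \<le> L X / (X - L X)"
      using nu0 X M by (intro divide_right_mono) (auto simp: norm_minus_commute)
    also have "norm (E u0) < e0" using Su(6) u0V VS by auto
    finally have "norm (u0 + G u0 - w) \<le> r/2" using X e0_def by linarith
    from contraction_exists[OF r0(1) cb lipG this] obtain u where
      uc: "u \<in> cball u0 r" and uw: "u + G u = w" by blast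
    have "u \<in> V" using uc cb by blast
    moreover have "norm (u - u0) \<le> r" using uc by (simp add: dist_norm norm_minus_commute)
    hence "norm (u - w) \<le> L X" using nu0 r0 norm_triangle_ineq[of "u - u0" "u0 - w"] by simp
    ultimately show ?thesis using uw unfolding X_def F_def by blast
  qed

  obtain g where holg: "g holomorphic_on F ` V" and gF: "\<And>u. u \<in> V \<Longrightarrow> g (F u) = u"
    using holomorphic_has_inverse[OF holomorphic_on_subset[OF holF VS] openV injF] by metis
  define \<rho> where "\<rho> = exp (-(M+1))"
  define \<rho>' where "\<rho>' = exp (-K)"
  define \<Upsilon> where "\<Upsilon> = (\<lambda>y. exp (g (Ln y)))"
  have bpi: "\<beta> < pi" using ba api by linarith
  have secY: "y \<noteq> 0" "Re (Ln y) < -K" "\<bar>Im (Ln y)\<bar> < \<beta>" if "y \<in> sector \<rho>' \<beta>" for y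
  proof -
    have h: "y \<noteq> 0 \<and> norm y < \<rho>' \<and> \<bar>Im (Ln y)\<bar> < \<beta>"
      using that b0 bpi sector_iff[of \<beta> y \<rho>'] by auto
    thus "y \<noteq> 0" "\<bar>Im (Ln y)\<bar> < \<beta>" by auto
    have "ln (norm y) < ln \<rho>'" using h by (subst ln_less_cancel_iff) (auto simp: \<rho>'_def)
    thus "Re (Ln y) < -K" using h by (simp add: \<rho>'_def)
  qed
  have Ycore: "\<exists>u\<in>V. F u = Ln y \<and> \<Upsilon> y = exp u \<and> norm (u - Ln y) \<le> L (- Re (Ln y))"
    if hy: "y \<in> sector \<rho>' \<beta>" for y
  proof -
    obtain u where u: "u \<in> V" "F u = Ln y" "norm (u - Ln y) \<le> L (- Re (Ln y))"
      using EX[OF secY(2)[OF hy] secY(3)[OF hy]] by blast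
    have "\<Upsilon> y = exp u" using gF[OF u(1)] u(2) by (simp add: \<Upsilon>_def)
    thus ?thesis using u by blast
  qed
  have notneg: "y \<notin> \<real>\<^sub>\<le>\<^sub>0" if "y \<in> sector \<rho>' \<beta>" for y
  proof
    assume "y \<in> \<real>\<^sub>\<le>\<^sub>0"
    moreover have "y \<noteq> 0" using secY(1)[OF that] .
    ultimately have "Re y < 0" "Im y = 0" by (auto simp: complex_nonpos_Reals_iff less_le complex_eq_iff)
    hence "Im (Ln y) = pi" using \<open>y \<noteq> 0\<close> by (simp add: Im_Ln_eq_pi)
    thus False using secY(3)[OF that] bpi by simp
  qed
  have openSec: "open (sector \<rho>' \<beta>)"
  proof -
    define T where "T = {u. Re u < -K \<and> \<bar>Im u\<bar> < \<beta>}"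
    have openT: "open T"
    proof -
      have "T = {u. Re u < -K} \<inter> {u. Im u < \<beta>} \<inter> {u. Im u > -\<beta>}" by (auto simp: T_def)
      thus ?thesis by (simp add: open_Int open_halfspace_Re_lt open_halfspace_Im_lt open_halfspace_Im_gt)
    qed
    have injT: "inj_on exp T"
    proof (rule inj_onI)
      fix a b assume "a \<in> T" "b \<in> T" "exp a = exp b"
      have "Ln (exp a) = a" using \<open>a \<in> T\<close> bpi by (intro Ln_exp) (auto simp: T_def)
      moreover have "Ln (exp b) = b" using \<open>b \<in> T\<close> bpi by (intro Ln_exp) (auto simp: T_def)
      ultimately show "a = b" using \<open>exp a = exp b\<close> by metis
    qed
    have "sector \<rho>' \<beta> = exp ` T"
    proof
      show "sector \<rho>' \<beta> \<subseteq> exp ` T"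
      proof
        fix y assume y: "y \<in> sector \<rho>' \<beta>"
        have "y = exp (Ln y)" using secY(1)[OF y] by simp
        moreover have "Ln y \<in> T" using secY(2)[OF y] secY(3)[OF y] by (simp add: T_def)
        ultimately show "y \<in> exp ` T" by blast
      qed
      show "exp ` T \<subseteq> sector \<rho>' \<beta>"
      proof
        fix y assume "y \<in> exp ` T"
        then obtain u where u: "u \<in> T" "y = exp u" by blast
        have "Re u < ln \<rho>'" using u by (simp add: T_def \<rho>'_def)
        thus "y \<in> sector \<rho>' \<beta>" using u b0 bpi by (simp add: T_def exp_in_sector \<rho>'_def)
      qed
    qed
    thus ?thesis using open_mapping_thm3[OF holomorphic_on_exp openT injT] by simp
  qed
  have holY: "\<Upsilon> holomorphic_on sector \<rho>' \<beta>"
  proof -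
    have "Ln holomorphic_on sector \<rho>' \<beta>" using notneg by (intro holomorphic_on_Ln) blast
    moreover have "Ln ` sector \<rho>' \<beta> \<subseteq> F ` V"
    proof
      fix x assume "x \<in> Ln ` sector \<rho>' \<beta>"
      then obtain y where y: "y \<in> sector \<rho>' \<beta>" "x = Ln y" by blast
      then obtain u where "u \<in> V" "F u = Ln y" using Ycore[OF y(1)] by blast
      thus "x \<in> F ` V" using y by force
    qed
    ultimately have "(g \<circ> Ln) holomorphic_on sector \<rho>' \<beta>"
      by (rule holomorphic_on_compose_gen[OF _ holg])
    hence "(exp \<circ> (g \<circ> Ln)) holomorphic_on sector \<rho>' \<beta>"
      by (rule holomorphic_on_compose_gen[OF _ holomorphic_on_exp]) auto
    thus ?thesis by (simp add: \<Upsilon>_def o_def)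
  qed
  have VSec: "exp u \<in> sector \<rho> \<alpha>" if "u \<in> V" for u
    using that a0 api r0 by (subst exp_in_sector) (auto simp: V_def \<rho>_def)
  show "\<exists>\<rho> \<rho>' \<Upsilon>. 0 < \<rho> \<and> \<rho> < s \<and> 0 < \<rho>' \<and>
       \<Upsilon> analytic_on sector \<rho>' \<beta> \<and> \<Upsilon> ` sector \<rho>' \<beta> \<subseteq> sector \<rho> \<alpha> \<and>
       (\<forall>y \<in> sector \<rho>' \<beta>. \<forall>z \<in> sector \<rho> \<alpha>. \<psi> z = y \<longleftrightarrow> z = \<Upsilon> y) \<and>
       \<Upsilon> \<sim>[at 0 within sector \<rho>' \<beta>] (\<lambda>y. - y / (of_real c * Ln y))"
  proof (rule exI[of _ \<rho>], rule exI[of _ \<rho>'], rule exI[of _ \<Upsilon>], intro conjI)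
    show "0 < \<rho>" by (simp add: \<rho>_def)
    show "0 < \<rho>'" by (simp add: \<rho>'_def)
    have "exp (-(M+1)) < exp (-M)" by simp
    also have "exp (-M) \<le> exp (ln s)" using M(2) by simp
    finally show "\<rho> < s" using assms(1) by (simp add: \<rho>_def)
    show "\<Upsilon> analytic_on sector \<rho>' \<beta>" using holY openSec by (simp add: analytic_on_open)
    show "\<Upsilon> ` sector \<rho>' \<beta> \<subseteq> sector \<rho> \<alpha>"
    proof
      fix x assume "x \<in> \<Upsilon> ` sector \<rho>' \<beta>"
      then obtain y where y: "y \<in> sector \<rho>' \<beta>" "x = \<Upsilon> y" by blast
      then obtain u where "u \<in> V" "\<Upsilon> y = exp u" using Ycore[OF y(1)] by blast
      thus "x \<in> sector \<rho> \<alpha>" using y VSec by simp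
    qed
    show "\<forall>y\<in>sector \<rho>' \<beta>. \<forall>z\<in>sector \<rho> \<alpha>. (\<psi> z = y) = (z = \<Upsilon> y)"
    proof (intro ballI iffI)
      fix y z assume y: "y \<in> sector \<rho>' \<beta>" and z: "z \<in> sector \<rho> \<alpha>"
      obtain u where u: "u \<in> V" "F u = Ln y" "\<Upsilon> y = exp u" using Ycore[OF y] by blast
      {
        assume "z = \<Upsilon> y"
        moreover have "exp (F u) = \<psi> (exp u)" using u(1) VS Su(8) by blast
        ultimately have "\<psi> z = exp (F u)" using u(3) by simp
        thus "\<psi> z = y" using u(2) secY(1)[OF y] by simp
      }
      {
        assume pz: "\<psi> z = y"
        define v where "v = Ln z"
        have zz: "z \<noteq> 0 \<and> norm z < \<rho> \<and> \<bar>Im v\<bar> < \<alpha>"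
          using z a0 api sector_iff[of \<alpha> z \<rho>] by (auto simp: v_def)
        have zv: "z = exp v" using zz by (simp add: v_def)
        have "ln (norm z) < ln \<rho>" using zz by (subst ln_less_cancel_iff) (auto simp: \<rho>_def)
        hence Rv: "Re v < -(M+1)" using zz by (simp add: v_def \<rho>_def)
        have vS: "v \<in> S" using Rv zz by (auto simp: S_def)
        have "exp (F v) = exp (Ln y)" using Su(8)[OF vS] pz zv secY(1)[OF y] by simp
        then obtain n :: int where n: "F v = Ln y + of_int (2 * n) * pi * \<i>" by (auto simp: exp_eq)
        have imF: "\<bar>Im (F v) - Im v\<bar> \<le> r/2" using Su(10)[OF vS] .
        have imn: "Im (F v) = Im (Ln y) + 2 * of_int n * pi" using n by simp
        have "\<bar>2 * of_int n * pi\<bar> < 2 * pi"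
        proof -
          have "\<bar>2 * of_int n * pi\<bar> \<le> \<bar>Im (F v) - Im v\<bar> + \<bar>Im v\<bar> + \<bar>Im (Ln y)\<bar>"
            using imn by linarith
          also have "\<dots> < r/2 + \<alpha> + \<beta>" using imF zz secY(3)[OF y] by linarith
          also have "\<dots> \<le> 2 * pi"
          proof -
            have "r/2 \<le> (\<alpha> - \<beta>)/8" using r0(3) by simp
            thus ?thesis using api bpi by simp
          qed
          finally show ?thesis .
        qed
        hence "\<bar>of_int n\<bar> < (1::real)" by (simp add: abs_mult)
        hence "n = 0" by linarith
        hence Fv: "F v = Ln y" using n by simp
        have "\<bar>Im (Ln y) - Im v\<bar> \<le> r/2" using imF Fv by simp
        hence "\<bar>Im v\<bar> < \<alpha> - r" using secY(3)[OF y] r0 r4 by linarith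
        hence "v \<in> V" using Rv by (simp add: V_def)
        hence "v = u" using inj_onD[OF injF, of v u] u(1,2) Fv by simp
        thus "z = \<Upsilon> y" using zv u(3) by simp
      }
    qed
    show "\<Upsilon> \<sim>[at 0 within sector \<rho>' \<beta>] (\<lambda>y. - y / (of_real c * Ln y))"
    proof (rule asymp_equivI', rule tendstoI)
      fix e :: real assume e: "e > 0"
      define t where "t = min (1/4) (e/24)"
      have t: "0 < t" "t \<le> 1/4" "12 * t < e" using e by (auto simp: t_def)
      obtain Mt where Mt: "\<And>u. Re u < -Mt \<Longrightarrow> \<bar>Im u\<bar> < \<alpha> \<Longrightarrow> norm (H u - 1) < t"
        using HA[OF t(1)] by blast
      have "eventually (\<lambda>X. K \<le> X \<and> L X / X \<le> t \<and> X - L X > Mt) at_top"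
      proof -
        note lims = asym_limits(1)[of A] asym_limits(2)[of A]
        have "eventually (\<lambda>X::real. K \<le> X) at_top" by (rule eventually_ge_at_top)
        moreover have "eventually (\<lambda>X. L X / X < t) at_top"
          using order_tendstoD(2)[OF lims(1), of t] t unfolding L_def by simp
        moreover have "eventually (\<lambda>X. X - L X > Mt) at_top"
          using filterlim_at_top_dense[THEN iffD1, OF lims(2)] unfolding L_def by blast
        ultimately show ?thesis by eventually_elim auto
      qed
      then obtain Xt where Xt: "\<And>X. X \<ge> Xt \<Longrightarrow> K \<le> X \<and> L X / X \<le> t \<and> X - L X > Mt"
        unfolding eventually_at_top_linorder by blast
      show "eventually (\<lambda>y. dist (\<Upsilon> y / (- y / (of_real c * Ln y))) 1 < e) (at 0 within sector \<rho>' \<beta>)"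
        unfolding eventually_at
      proof (intro exI[of _ "exp (-Xt)"] conjI ballI impI)
        show "0 < exp (-Xt)" by simp
        fix y assume y: "y \<in> sector \<rho>' \<beta>" and yd: "y \<noteq> 0 \<and> dist y 0 < exp (-Xt)"
        define w where "w = Ln y"
        define X where "X = - Re w"
        have "ln (norm y) < ln (exp (-Xt))" using yd by (subst ln_less_cancel_iff) auto
        hence "X > Xt" using yd by (simp add: X_def w_def)
        hence XX: "K \<le> X" "L X / X \<le> t" "X - L X > Mt" using Xt[of X] by auto
        have X1: "X \<ge> 1" using K[OF XX(1)] by simp
        obtain u where u: "u \<in> V" "F u = w" "\<Upsilon> y = exp u" "norm (u - w) \<le> L X"
          using Ycore[OF y] by (auto simp: w_def X_def)
        have uS: "u \<in> S" using u(1) VS by auto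
        have LX0: "0 \<le> L X" using u(4) norm_ge_zero[of "u - w"] by linarith
        have nw: "X \<le> norm w" using abs_Re_le_cmod[of w] by (simp add: X_def)
        hence wnz: "w \<noteq> 0" using X1 by auto
        have unz: "u \<noteq> 0" using Su(1)[OF uS] .
        have Hnz: "H u \<noteq> 0" using Su(5)[OF uS] by auto
        have yeq: "y = - of_real c * exp u * u * H u"
        proof -
          have "y = exp w" using yd by (simp add: w_def)
          also have "\<dots> = exp (F u)" using u(2) by simp
          also have "\<dots> = \<psi> (exp u)" using Su(8)[OF uS] .
          also have "\<dots> = - of_real c * exp u * u * H u" using Su(7)[OF uS] .
          finally show ?thesis .
        qed
        have q1: "- y / (of_real c * w) = exp u * u * H u / w"
          by (subst yeq) (use cnz wnz in \<open>simp add: field_simps\<close>)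
        have "\<Upsilon> y / (- y / (of_real c * Ln y)) = exp u / (exp u * u * H u / w)"
          using q1 u(3) by (simp add: w_def)
        also have "\<dots> = inverse ((u / w) * H u)"
          using wnz unz Hnz by (simp add: field_simps)
        finally have req: "\<Upsilon> y / (- y / (of_real c * Ln y)) = inverse ((u / w) * H u)" .
        have a1: "norm (u / w - 1) \<le> t"
        proof -
          have "u / w - 1 = (u - w) / w" using wnz by (simp add: field_simps)
          hence "norm (u / w - 1) = norm (u - w) / norm w" by (simp add: norm_divide)
          also have "\<dots> \<le> L X / X" using u(4) nw X1 LX0 by (intro frac_le) auto
          finally show ?thesis using XX by linarith
        qed
        have h1: "norm (H u - 1) \<le> t"
        proof -
          have "\<bar>Re (u - w)\<bar> \<le> L X" using u(4) abs_Re_le_cmod order_trans by blast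
          hence "Re u < -Mt" using XX by (simp add: X_def)
          moreover have "\<bar>Im u\<bar> < \<alpha>" using u(1) r0 by (auto simp: V_def)
          ultimately show ?thesis using Mt by (simp add: less_imp_le)
        qed
        have "norm (inverse ((u / w) * H u) - 1) \<le> 12 * t"
          by (rule inv_prod_bound[OF a1 h1 t(2)])
        thus "dist (\<Upsilon> y / (- y / (of_real c * Ln y))) 1 < e"
          using t req by (simp add: dist_norm)
      qed
    qed
  qed
qed
end
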